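(* Any non-degenerate twisted diagonal action is properly discontinuous, and the quotient is a compact manifold.
   Context: Let $E$ be a real vector space of dimension $k$, $\mathcal B$ a basis of $E$, and $\mathcal L$ the free abelian group generated by $\mathcal B$ (acting on $E$ by translations). Let $\xi_1,\dots,\xi_s\in(\mathbb R_{>0})^s$, $\xi_i=(\xi_i^{(1)},\dots,\xi_i^{(s)})$, and let $A_1,\dots,A_s\in GL(E)$ be pairwise commuting linear automorphisms, each restricting to an automorphism of $\mathcal L$. Let $G=\mathbb Z^s\ltimes\mathcal L$ be the semidirect product where the $i$-th generator $\tau_i$ of $\mathbb Z^s$ acts on $\mathcal L$ by $A_i$. The twisted diagonal action of $G$ on $(\mathbb R_{>0})^s\times E$ is: $\mathcal L$ acts by translations on the $E$ factor, and $\tau_i(x_1,\dots,x_s,v)=(\xi_i^{(1)}x_1,\dots,\xi_i^{(s)}x_s,A_i(v))$. It is non-degenerate if the vectors $(\log\xi_i^{(1)},\dots,\log\xi_i^{(s)})$, $1\le i\le s$, form a basis of $\mathbb R^s$. *)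

theory Defs
  imports "HOL-Analysis.Analysis"
begin

definition zpow_fun :: "('e \<Rightarrow> 'e) \<Rightarrow> int \<Rightarrow> ('e \<Rightarrow> 'e)" where
  "zpow_fun f m = (if 0 \<le> m then f ^^ nat m else (inv f) ^^ nat (- m))"

text \<open>A^n = product of the A_i^(n_i) for pairwise commuting A_i.\<close>
definition Apow :: "('s::finite \<Rightarrow> 'e \<Rightarrow> 'e) \<Rightarrow> ('s \<Rightarrow> int) \<Rightarrow> ('e \<Rightarrow> 'e)" where
  "Apow A n = Finite_Set.fold (\<lambda>i g. zpow_fun (A i) (n i) \<circ> g) id (UNIV :: 's set)"

definition int_span :: "'e::real_vector set \<Rightarrow> 'e set" where
  "int_span B = {v. \<exists>c :: 'e \<Rightarrow> int. v = (\<Sum>b\<in>B. real_of_int (c b) *\<^sub>R b)}"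

definition tda_space :: "((real^'s) \<times> 'e::euclidean_space) set" where
  "tda_space = {x. \<forall>j. 0 < fst x $ j}"

text \<open>The group G = Z^s \<ltimes> L, as pairs (n, l), with element (n,l) = l \<cdot> \<tau>^n.\<close>
definition tda_group :: "'e::euclidean_space set \<Rightarrow> (('s::finite \<Rightarrow> int) \<times> 'e) set" where
  "tda_group B = UNIV \<times> int_span B"

definition tda_act ::
  "('s::finite \<Rightarrow> real^'s) \<Rightarrow> ('s \<Rightarrow> 'e \<Rightarrow> 'e) \<Rightarrow> (('s \<Rightarrow> int) \<times> 'e::real_vector)
     \<Rightarrow> (real^'s) \<times> 'e \<Rightarrow> (real^'s) \<times> 'e" where
  "tda_act \<xi> A g p =
     ((\<chi> j. fst p $ j * (\<Prod>i\<in>UNIV. (\<xi> i $ j) powi (fst g i))),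
      Apow A (fst g) (snd p) + snd g)"

definition tda_nondegenerate :: "('s::finite \<Rightarrow> real^'s) \<Rightarrow> bool" where
  "tda_nondegenerate \<xi> \<longleftrightarrow>
     (let v = (\<lambda>i. \<chi> j. ln (\<xi> i $ j)) in
        inj v \<and> independent (range v) \<and> span (range v) = UNIV)"

definition properly_discontinuous ::
  "'g set \<Rightarrow> ('g \<Rightarrow> 'a \<Rightarrow> 'a) \<Rightarrow> 'a::topological_space set \<Rightarrow> bool" where
  "properly_discontinuous G act X \<longleftrightarrow>
     (\<forall>K. compact K \<and> K \<subseteq> X \<longrightarrow> finite {g \<in> G. act g ` K \<inter> K \<noteq> {}})"

definition orbit :: "'g set \<Rightarrow> ('g \<Rightarrow> 'a \<Rightarrow> 'a) \<Rightarrow> 'a \<Rightarrow> 'a set" where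
  "orbit G act p = {act g p | g. g \<in> G}"

definition quotient_topology :: "'a topology \<Rightarrow> ('a \<Rightarrow> 'b) \<Rightarrow> 'b topology" where
  "quotient_topology X f =
     topology (\<lambda>U. U \<subseteq> f ` topspace X \<and> openin X {x \<in> topspace X. f x \<in> U})"

definition is_manifold_modelled_on :: "'b topology \<Rightarrow> 'm::euclidean_space itself \<Rightarrow> bool" where
  "is_manifold_modelled_on T _ \<longleftrightarrow>
     Hausdorff_space T \<and> second_countable T \<and>
     (\<forall>q \<in> topspace T. \<exists>U. openin T U \<and> q \<in> U \<and>
        (\<exists>V :: 'm set. open V \<and> subtopology T U homeomorphic_space top_of_set V))"

end

theory Submission
  imports Defs
begin


lemma zpow_succ:
  assumes "bij f" shows "zpow_fun f (a + 1) = f \<circ> zpow_fun f a"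
proof -
  have fi: "f \<circ> inv f = id" using assms bij_is_surj surj_iff by blast
  show ?thesis
  proof (cases "0 \<le> a")
    case True
    then have "nat (a+1) = Suc (nat a)" by simp
    then show ?thesis using True by (simp add: zpow_fun_def)
  next
    case False
    then have "nat (-a) = Suc (nat (-(a+1)))" by simp
    then obtain k where k: "nat (-a) = Suc k" "nat (-(a+1)) = k" by blast
    show ?thesis
    proof (cases "a = -1")
      case True then show ?thesis by (simp add: zpow_fun_def fi)
    next
      case F2: False
      with False have "\<not> 0 \<le> a + 1" by simp
      then show ?thesis using False k
        by (simp add: zpow_fun_def o_assoc fi)
    qed
  qed
qed

lemma zpow_zero[simp]: "zpow_fun f 0 = id"
  by (simp add: zpow_fun_def)

lemma zpow_pred:
  assumes "bij f" shows "zpow_fun f (a - 1) = inv f \<circ> zpow_fun f a"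
proof -
  have fi: "inv f \<circ> f = id" using assms bij_is_inj inj_iff by blast
  have "zpow_fun f a = f \<circ> zpow_fun f (a - 1)" using zpow_succ[OF assms, of "a - 1"] by simp
  then have "inv f \<circ> zpow_fun f a = inv f \<circ> f \<circ> zpow_fun f (a - 1)" by (simp add: o_assoc)
  then show ?thesis by (simp add: fi)
qed

lemma zpow_add:
  assumes "bij f" shows "zpow_fun f (a + b) = zpow_fun f b \<circ> zpow_fun f a"
proof (induct b rule: int_induct[where k=0])
  case base then show ?case by simp
next
  case (step1 i)
  have "zpow_fun f (a + (i + 1)) = zpow_fun f ((a + i) + 1)" by (simp add: algebra_simps)
  also have "\<dots> = f \<circ> zpow_fun f (a + i)" by (rule zpow_succ[OF assms])
  also have "\<dots> = zpow_fun f (i + 1) \<circ> zpow_fun f a" using step1 zpow_succ[OF assms, of i] by (simp only: comp_assoc)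
  finally show ?case .
next
  case (step2 i)
  have "zpow_fun f (a + (i - 1)) = zpow_fun f ((a + i) - 1)" by (simp add: algebra_simps)
  also have "\<dots> = inv f \<circ> zpow_fun f (a + i)" by (rule zpow_pred[OF assms])
  also have "\<dots> = zpow_fun f (i - 1) \<circ> zpow_fun f a" using step2 zpow_pred[OF assms, of i] by (simp only: comp_assoc)
  finally show ?case .
qed

lemma comm_inv:
  assumes "bij f" "g \<circ> f = f \<circ> g" shows "g \<circ> inv f = inv f \<circ> g"
proof -
  have fi: "inv f \<circ> f = id" using assms bij_is_inj inj_iff by blast
  have if': "f \<circ> inv f = id" using assms bij_is_surj surj_iff by blast
  have "inv f \<circ> g = inv f \<circ> g \<circ> (f \<circ> inv f)" by (simp add: if')
  also have "\<dots> = inv f \<circ> (g \<circ> f) \<circ> inv f" by (simp add: o_assoc)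
  also have "\<dots> = (inv f \<circ> f) \<circ> g \<circ> inv f" using assms(2) by (simp add: o_assoc)
  also have "\<dots> = g \<circ> inv f" by (simp add: fi)
  finally show ?thesis by simp
qed

lemma comm_zpow:
  assumes "bij f" "g \<circ> f = f \<circ> g" shows "g \<circ> zpow_fun f a = zpow_fun f a \<circ> g"
proof (induct a rule: int_induct[where k=0])
  case base then show ?case by simp
next
  case (step1 i)
  have "g \<circ> zpow_fun f (i + 1) = (g \<circ> f) \<circ> zpow_fun f i" by (simp only: zpow_succ[OF assms(1)] comp_assoc)
  also have "\<dots> = f \<circ> (g \<circ> zpow_fun f i)" by (simp only: assms(2) comp_assoc)
  also have "\<dots> = zpow_fun f (i + 1) \<circ> g" by (simp only: step1 zpow_succ[OF assms(1)] comp_assoc)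
  finally show ?case .
next
  case (step2 i)
  have "g \<circ> zpow_fun f (i - 1) = (g \<circ> inv f) \<circ> zpow_fun f i" by (simp only: zpow_pred[OF assms(1)] comp_assoc)
  also have "\<dots> = inv f \<circ> (g \<circ> zpow_fun f i)" by (simp only: comm_inv[OF assms] comp_assoc)
  also have "\<dots> = zpow_fun f (i - 1) \<circ> g" by (simp only: step2 zpow_pred[OF assms(1)] comp_assoc)
  finally show ?case .
qed

lemma linear_zpow:
  fixes f :: "'e::euclidean_space \<Rightarrow> 'e"
  assumes "linear f" "bij f" shows "linear (zpow_fun f a)"
proof -
  have li: "linear (inv f)" using assms bij_is_inj inj_linear_imp_inv_linear by blast
  have "linear (g ^^ n)" if "linear g" for g :: "'e \<Rightarrow> 'e" and n
    using that by (induct n) (auto intro: linear_compose linear_id)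
  then show ?thesis using assms li by (simp add: zpow_fun_def)
qed

lemma lattice_zpow:
  assumes "bij f" "f ` L = L" shows "zpow_fun f a ` L = L"
proof -
  have "inv f ` L = L" using assms by (metis bij_is_inj image_inv_f_f)
  moreover have "(g ^^ n) ` L = L" if "g ` L = L" for g :: "'a \<Rightarrow> 'a" and n
    using that proof (induct n)
    case (Suc n)
    have "(g ^^ Suc n) ` L = g ` ((g ^^ n) ` L)" by (simp add: image_image)
    then show ?case using Suc by simp
  qed simp
  ultimately show ?thesis using assms by (simp add: zpow_fun_def)
qed




locale tda =
  fixes B :: "'e::euclidean_space set"
    and \<xi> :: "'s::finite \<Rightarrow> real^'s"
    and A :: "'s \<Rightarrow> 'e \<Rightarrow> 'e"
  assumes basis: "independent B" "span B = UNIV"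
    and xi_pos: "\<And>i j. 0 < \<xi> i $ j"
    and A_lin: "\<And>i. linear (A i)"
    and A_bij: "\<And>i. bij (A i)"
    and A_lattice: "\<And>i. A i ` int_span B = int_span B"
    and A_comm: "\<And>i i'. A i \<circ> A i' = A i' \<circ> A i"
    and nondeg: "tda_nondegenerate \<xi>"
begin

lemma zz_comm: "zpow_fun (A x) a \<circ> zpow_fun (A y) b = zpow_fun (A y) b \<circ> zpow_fun (A x) a"
proof -
  have "A y \<circ> zpow_fun (A x) a = zpow_fun (A x) a \<circ> A y"
    by (rule comm_zpow[OF A_bij A_comm])
  then show ?thesis by (intro comm_zpow[OF A_bij]) simp
qed

definition AP :: "('s \<Rightarrow> int) \<Rightarrow> 's set \<Rightarrow> 'e \<Rightarrow> 'e" where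
  "AP n I = Finite_Set.fold (\<lambda>i g. zpow_fun (A i) (n i) \<circ> g) id I"

lemma AP_cf: "comp_fun_commute_on UNIV (\<lambda>i g. zpow_fun (A i) (n i) \<circ> g)"
  by unfold_locales (auto simp: fun_eq_iff zz_comm[unfolded fun_eq_iff o_def])

lemma AP_empty[simp]: "AP n {} = id"
  by (simp add: AP_def)

lemma AP_insert: "finite I \<Longrightarrow> i \<notin> I \<Longrightarrow> AP n (insert i I) = zpow_fun (A i) (n i) \<circ> AP n I"
  unfolding AP_def by (rule comp_fun_commute_on.fold_insert[OF AP_cf]) auto

lemma AP_commA: "finite I \<Longrightarrow> AP n I \<circ> A j = A j \<circ> AP n I"
proof (induct I rule: finite_induct)
  case (insert i I)
  have c: "zpow_fun (A i) (n i) \<circ> A j = A j \<circ> zpow_fun (A i) (n i)"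
    using comm_zpow[OF A_bij A_comm, of j i "n i"] by simp
  have "AP n (insert i I) \<circ> A j = zpow_fun (A i) (n i) \<circ> (AP n I \<circ> A j)"
    by (simp only: AP_insert[OF insert(1,2)] comp_assoc)
  also have "\<dots> = (zpow_fun (A i) (n i) \<circ> A j) \<circ> AP n I"
    by (simp only: insert(3) comp_assoc)
  also have "\<dots> = A j \<circ> AP n (insert i I)"
    by (simp only: c AP_insert[OF insert(1,2)] comp_assoc)
  finally show ?case .
qed (simp add: AP_def)

lemma AP_add: "finite I \<Longrightarrow> AP (\<lambda>k. n k + m k) I = AP n I \<circ> AP m I"
proof (induct I rule: finite_induct)
  case (insert i I)
  have c1: "AP n I \<circ> zpow_fun (A i) (m i) = zpow_fun (A i) (m i) \<circ> AP n I"
    by (rule comm_zpow[OF A_bij AP_commA[OF insert(1)]])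
  have "AP (\<lambda>k. n k + m k) (insert i I) = zpow_fun (A i) (m i + n i) \<circ> (AP n I \<circ> AP m I)"
    by (simp only: AP_insert[OF insert(1,2)] insert(3) add.commute[of "n i" "m i"])
  also have "\<dots> = zpow_fun (A i) (n i) \<circ> (zpow_fun (A i) (m i) \<circ> AP n I) \<circ> AP m I"
    by (simp only: zpow_add[OF A_bij] comp_assoc)
  also have "\<dots> = AP n (insert i I) \<circ> AP m (insert i I)"
    by (simp only: AP_insert[OF insert(1,2)] c1[symmetric] comp_assoc)
  finally show ?case .
qed (simp add: AP_def)

lemma AP_zero: "finite I \<Longrightarrow> AP (\<lambda>_. 0) I = id"
  by (induct I rule: finite_induct) (auto simp: AP_insert)

lemma AP_linear: "finite I \<Longrightarrow> linear (AP n I)"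
proof (induct I rule: finite_induct)
  case (insert i I)
  show ?case unfolding AP_insert[OF insert(1,2)]
    by (rule linear_compose[OF insert(3) linear_zpow[OF A_lin A_bij]])
qed (simp only: AP_empty linear_id)

lemma AP_lattice: "finite I \<Longrightarrow> AP n I ` int_span B = int_span B"
proof (induct I rule: finite_induct)
  case (insert i I)
  show ?case unfolding AP_insert[OF insert(1,2)] image_comp[symmetric] insert(3)
    by (rule lattice_zpow[OF A_bij A_lattice])
qed (simp add: AP_def)

lemma Apow_AP: "Apow A n = AP n UNIV"
  by (simp add: Apow_def AP_def)

lemma Apow_add: "Apow A (\<lambda>k. n k + m k) = Apow A n \<circ> Apow A m"
  by (simp add: Apow_AP AP_add)

lemma Apow_zero[simp]: "Apow A (\<lambda>_. 0) = id"
  by (simp add: Apow_AP AP_zero)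

lemma Apow_linear: "linear (Apow A n)"
  by (simp add: Apow_AP AP_linear)

lemma Apow_lattice: "Apow A n ` int_span B = int_span B"
  by (simp add: Apow_AP AP_lattice)

end



lemma int_span_zero: "0 \<in> int_span B"
  unfolding int_span_def by (rule CollectI, rule exI[of _ "\<lambda>_. 0"]) simp

lemma int_span_add: "a \<in> int_span B \<Longrightarrow> b \<in> int_span B \<Longrightarrow> a + b \<in> int_span B"
proof -
  assume "a \<in> int_span B" "b \<in> int_span B"
  then obtain c d where "a = (\<Sum>b\<in>B. real_of_int (c b) *\<^sub>R b)" "b = (\<Sum>b\<in>B. real_of_int (d b) *\<^sub>R b)"
    unfolding int_span_def by blast
  then show ?thesis unfolding int_span_def
    by (auto intro!: exI[of _ "\<lambda>x. c x + d x"] simp: scaleR_add_left sum.distrib)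
qed

lemma int_span_neg: "a \<in> int_span B \<Longrightarrow> - a \<in> int_span B"
proof -
  assume "a \<in> int_span B"
  then obtain c where "a = (\<Sum>b\<in>B. real_of_int (c b) *\<^sub>R b)"
    unfolding int_span_def by blast
  then show ?thesis unfolding int_span_def
    by (auto intro!: exI[of _ "\<lambda>x. - c x"] simp: sum_negf)
qed

context tda begin

abbreviation "G \<equiv> (tda_group B :: (('s \<Rightarrow> int) \<times> 'e) set)"
abbreviation "act \<equiv> tda_act \<xi> A"
abbreviation "S \<equiv> (tda_space :: ((real^'s) \<times> 'e) set)"
abbreviation "q \<equiv> orbit G act"

definition gmul :: "('s \<Rightarrow> int) \<times> 'e \<Rightarrow> ('s \<Rightarrow> int) \<times> 'e \<Rightarrow> ('s \<Rightarrow> int) \<times> 'e" where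
  "gmul g h = ((\<lambda>k. fst g k + fst h k), Apow A (fst g) (snd h) + snd g)"

definition ginv :: "('s \<Rightarrow> int) \<times> 'e \<Rightarrow> ('s \<Rightarrow> int) \<times> 'e" where
  "ginv g = ((\<lambda>k. - fst g k), - Apow A (\<lambda>k. - fst g k) (snd g))"

definition gone :: "('s \<Rightarrow> int) \<times> 'e" where "gone = ((\<lambda>_. 0), 0)"

lemma xi_nz: "\<xi> i $ j \<noteq> 0" using xi_pos[of i j] by simp

lemma act_comp: "act g (act h p) = act (gmul g h) p"
proof -
  have "(\<Prod>i\<in>UNIV. (\<xi> i $ j) powi (fst h i)) * (\<Prod>i\<in>UNIV. (\<xi> i $ j) powi (fst g i))
      = (\<Prod>i\<in>UNIV. (\<xi> i $ j) powi (fst g i + fst h i))" for j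
    by (simp add: power_int_add xi_nz prod.distrib mult.commute)
  moreover have "Apow A (fst g) (Apow A (fst h) (snd p) + snd h) + snd g
      = Apow A (\<lambda>k. fst g k + fst h k) (snd p) + (Apow A (fst g) (snd h) + snd g)"
    by (simp add: Apow_add linear_add[OF Apow_linear])
  ultimately show ?thesis
    by (simp add: tda_act_def gmul_def mult.assoc)
qed

lemma gmul_G: "g \<in> G \<Longrightarrow> h \<in> G \<Longrightarrow> gmul g h \<in> G"
  unfolding tda_group_def gmul_def
  using Apow_lattice by (auto intro!: int_span_add) (metis imageI)

lemma act_one[simp]: "act gone p = p"
  by (simp add: tda_act_def gone_def)

lemma gone_G: "gone \<in> G"
  by (simp add: tda_group_def gone_def int_span_zero)

lemma ginv_G: "g \<in> G \<Longrightarrow> ginv g \<in> G"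
  unfolding tda_group_def ginv_def
  using Apow_lattice by (auto intro!: int_span_neg) (metis imageI)

lemma act_ginv1: "act (ginv g) (act g p) = p"
proof -
  have "Apow A (\<lambda>k. - fst g k) (Apow A (fst g) v) = v" for v
    using Apow_add[of "\<lambda>k. - fst g k" "fst g"] by (simp add: fun_eq_iff)
  then show ?thesis
    unfolding act_comp by (simp add: tda_act_def gmul_def ginv_def xi_nz power_int_minus
      linear_add[OF Apow_linear] prod_inversef[symmetric])
qed

lemma act_ginv2: "act g (act (ginv g) p) = p"
proof -
  have "Apow A (fst g) (Apow A (\<lambda>k. - fst g k) v) = v" for v
    using Apow_add[of "fst g" "\<lambda>k. - fst g k"] by (simp add: fun_eq_iff)
  then show ?thesis
    unfolding act_comp by (simp add: tda_act_def gmul_def ginv_def xi_nz power_int_minus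
      linear_add[OF Apow_linear] linear_neg[OF Apow_linear] prod_inversef[symmetric])
qed

lemma act_S: "p \<in> S \<Longrightarrow> act g p \<in> S"
  by (auto simp: tda_space_def tda_act_def xi_pos intro!: prod_pos mult_pos_pos zero_less_power_int)

lemma act_S_iff: "act g p \<in> S \<longleftrightarrow> p \<in> S"
  using act_S[of p g] act_S[of "act g p" "ginv g"] act_ginv1 by auto

lemma orbit_eq: "q a = q b \<longleftrightarrow> (\<exists>g\<in>G. b = act g a)"
proof
  assume "q a = q b"
  then have "b \<in> q a" using gone_G unfolding orbit_def by (metis (mono_tags, lifting) act_one mem_Collect_eq)
  then show "\<exists>g\<in>G. b = act g a" unfolding orbit_def by auto
next
  assume "\<exists>g\<in>G. b = act g a"
  then obtain g where g: "g \<in> G" "b = act g a" by blast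
  show "q a = q b"
  proof
    show "q a \<subseteq> q b"
    proof
      fix x assume "x \<in> q a"
      then obtain h where h: "h \<in> G" "x = act h a" unfolding orbit_def by blast
      have "x = act (gmul h (ginv g)) b" using g h by (simp add: act_comp[symmetric] act_ginv1)
      then show "x \<in> q b" unfolding orbit_def using gmul_G ginv_G g h by blast
    qed
    show "q b \<subseteq> q a"
    proof
      fix x assume "x \<in> q b"
      then obtain h where h: "h \<in> G" "x = act h b" unfolding orbit_def by blast
      have "x = act (gmul h g) a" using g h by (simp add: act_comp)
      then show "x \<in> q a" unfolding orbit_def using gmul_G g h by blast
    qed
  qed
qed

end



lemma qt_istopology: "istopology (\<lambda>U. U \<subseteq> f ` topspace X \<and> openin X {x\<in>topspace X. f x \<in> U})"
proof -
  have 1: "{x \<in> topspace X. f x \<in> S \<inter> T} = {x \<in> topspace X. f x \<in> S} \<inter> {x \<in> topspace X. f x \<in> T}" for S T by auto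
  have 2: "{x \<in> topspace X. f x \<in> \<Union>K} = \<Union>((\<lambda>S. {x \<in> topspace X. f x \<in> S}) ` K)" for K by auto
  show ?thesis unfolding istopology_def 1 2 by (auto intro!: openin_Union)
qed

lemma openin_qt: "openin (quotient_topology X f) U \<longleftrightarrow> U \<subseteq> f ` topspace X \<and> openin X {x\<in>topspace X. f x \<in> U}"
  unfolding quotient_topology_def using qt_istopology[of f X] by (simp add: topology_inverse')

lemma topspace_qt: "topspace (quotient_topology X f) = f ` topspace X"
proof -
  have "openin (quotient_topology X f) (f ` topspace X)"
  proof -
    have "{x \<in> topspace X. f x \<in> f ` topspace X} = topspace X" by auto
    then show ?thesis unfolding openin_qt by simp
  qed
  then have "f ` topspace X \<subseteq> topspace (quotient_topology X f)" by (rule openin_subset)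
  moreover have "topspace (quotient_topology X f) \<subseteq> f ` topspace X"
    using openin_topspace[of "quotient_topology X f"] unfolding openin_qt by blast
  ultimately show ?thesis by blast
qed

lemma continuous_qt: "continuous_map X (quotient_topology X f) f"
  unfolding continuous_map_def topspace_qt openin_qt by auto

lemma open_map_qt:
  assumes "\<And>W. openin X W \<Longrightarrow> openin X {x\<in>topspace X. f x \<in> f ` W}"
  shows "open_map X (quotient_topology X f) f"
  unfolding open_map_def openin_qt using assms openin_subset by blast




context tda begin

lemma open_S: "open S"
proof -
  have eq: "S = (\<Inter>j\<in>UNIV. {p. 0 < fst p $ j})" by (auto simp: tda_space_def)
  have "open {p::(real^'s) \<times> 'e. 0 < fst p $ j}" for j
    by (intro open_Collect_less continuous_intros)
  then show ?thesis unfolding eq by (intro open_INT) auto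
qed

lemma Apow_bl: "bounded_linear (Apow A n)"
  using Apow_linear linear_conv_bounded_linear by blast

lemma act_cont: "continuous_on UNIV (act g)"
  unfolding tda_act_def
  by (intro continuous_intros continuous_on_compose2[OF bounded_linear.continuous_on[OF Apow_bl]]) auto

lemma act_isCont: "isCont (act g) x"
  using act_cont continuous_on_eq_continuous_at by blast

lemma q_sat: "{x\<in>S. q x \<in> q ` W} = (\<Union>g\<in>G. act g -` W)" if "W \<subseteq> S"
proof
  show "{x\<in>S. q x \<in> q ` W} \<subseteq> (\<Union>g\<in>G. act g -` W)"
  proof clarify
    fix x w assume "x \<in> S" "w \<in> W" "q x = q w"
    then obtain g where "g \<in> G" "w = act g x" using orbit_eq by blast
    then show "x \<in> (\<Union>g\<in>G. act g -` W)" using \<open>w \<in> W\<close> by auto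
  qed
  show "(\<Union>g\<in>G. act g -` W) \<subseteq> {x\<in>S. q x \<in> q ` W}"
  proof
    fix x assume "x \<in> (\<Union>g\<in>G. act g -` W)"
    then obtain g where "g \<in> G" "act g x \<in> W" by blast
    then have "x \<in> S" using that act_S_iff by blast
    moreover have "q x = q (act g x)" using orbit_eq \<open>g \<in> G\<close> by blast
    ultimately show "x \<in> {x\<in>S. q x \<in> q ` W}" using \<open>act g x \<in> W\<close> by blast
  qed
qed

abbreviation "T \<equiv> quotient_topology (top_of_set S) q"

lemma openin_S: "openin (top_of_set S) W \<longleftrightarrow> open W \<and> W \<subseteq> S"
  using open_S openin_open_eq by blast

lemma q_open_map: "open_map (top_of_set S) T q"
proof (rule open_map_qt)
  fix W assume "openin (top_of_set S) W"
  then have W: "open W" "W \<subseteq> S" using openin_S by auto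
  have "open (\<Union>g\<in>G. act g -` W)"
    using W by (intro open_UN ballI continuous_open_vimage act_isCont) auto
  moreover have "(\<Union>g\<in>G. act g -` W) \<subseteq> S" using q_sat[OF W(2)] by blast
  ultimately show "openin (top_of_set S) {x \<in> topspace (top_of_set S). q x \<in> q ` W}"
    using q_sat[OF W(2)] openin_S by simp
qed

lemma q_open: "open W \<Longrightarrow> W \<subseteq> S \<Longrightarrow> openin T (q ` W)"
  using q_open_map openin_S unfolding open_map_def by blast

lemma q_cont: "continuous_map (top_of_set S) T q"
  by (rule continuous_qt)

lemma topspace_T: "topspace T = q ` S"
  by (simp add: topspace_qt)

end



context tda begin

definition w :: "'s \<Rightarrow> real^'s" where "w i = (\<chi> j. ln (\<xi> i $ j))"
definition Lf :: "real^'s \<Rightarrow> real^'s" where "Lf c = (\<Sum>i\<in>UNIV. c $ i *\<^sub>R w i)"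
definition M :: "('s \<Rightarrow> int) \<Rightarrow> real^'s" where "M n = (\<Sum>i\<in>UNIV. real_of_int (n i) *\<^sub>R w i)"

lemma nd: "inj w" "independent (range w)" "span (range w) = UNIV"
  using nondeg unfolding tda_nondegenerate_def Let_def w_def[abs_def] by auto

lemma Lf_linear: "linear Lf"
  by (rule linearI) (simp_all add: Lf_def scaleR_add_left sum.distrib scaleR_sum_right)

lemma Lf_inj: "Lf c = 0 \<Longrightarrow> c = 0"
proof (rule ccontr)
  assume c0: "Lf c = 0" and "c \<noteq> 0"
  then obtain i0 where i0: "c $ i0 \<noteq> 0" by (metis vec_eq_iff zero_index)
  define u where "u v = c $ (inv w v)" for v
  have "(\<Sum>v\<in>range w. u v *\<^sub>R v) = (\<Sum>i\<in>UNIV. u (w i) *\<^sub>R w i)"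
    by (rule sum.reindex[OF nd(1), unfolded o_def])
  also have "\<dots> = Lf c" unfolding Lf_def u_def using nd(1) by simp
  finally have "(\<Sum>v\<in>range w. u v *\<^sub>R v) = 0" using c0 by simp
  moreover have "u (w i0) \<noteq> 0" unfolding u_def using nd(1) i0 by simp
  ultimately have "dependent (range w)"
    by (subst real_vector.dependent_finite) auto
  then show False using nd(2) by simp
qed

lemma Lf_below: "\<exists>e>0. \<forall>c. e * norm c \<le> norm (Lf c)"
  using injective_imp_isometric[of UNIV Lf] Lf_linear Lf_inj linear_conv_bounded_linear by auto

lemma M_Lf: "M n = Lf (\<chi> i. real_of_int (n i))"
  by (simp add: M_def Lf_def)

lemma M_inj: "M n = 0 \<Longrightarrow> n = (\<lambda>_. 0)"
  using Lf_inj[of "\<chi> i. real_of_int (n i)"] by (auto simp: M_Lf vec_eq_iff fun_eq_iff)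

lemma finite_M: "finite {n. norm (M n) \<le> R}"
proof -
  obtain e where e: "e > 0" "\<And>c. e * norm c \<le> norm (Lf c)" using Lf_below by blast
  define N where "N = ceiling (R / e)"
  have "{n. norm (M n) \<le> R} \<subseteq> (\<Pi>\<^sub>E i\<in>UNIV. {-N..N})"
  proof
    fix n assume "n \<in> {n. norm (M n) \<le> R}"
    then have nR: "norm (M n) \<le> R" by simp
    have "\<bar>n i\<bar> \<le> N" for i
    proof -
      have "e * \<bar>real_of_int (n i)\<bar> \<le> e * norm (\<chi> i. real_of_int (n i))"
        using component_le_norm_cart[of "\<chi> i. real_of_int (n i)" i] e(1) by simp
      also have "\<dots> \<le> R" using e(2)[of "\<chi> i. real_of_int (n i)"] nR by (simp add: M_Lf)
      finally have "\<bar>real_of_int (n i)\<bar> \<le> R / e" using e(1) by (simp add: field_simps)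
      then show ?thesis unfolding N_def by linarith
    qed
    then show "n \<in> (\<Pi>\<^sub>E i\<in>UNIV. {-N..N})" by (auto simp: abs_le_iff) (metis add.inverse_inverse neg_le_iff_le)
  qed
  moreover have "finite (\<Pi>\<^sub>E i\<in>(UNIV::'s set). {-N..N})" by (intro finite_PiE) auto
  ultimately show ?thesis using finite_subset by blast
qed

lemma w_decomp: "\<exists>u. y = (\<Sum>i\<in>UNIV. u i *\<^sub>R w i)"
proof -
  have "y \<in> span (range w)" using nd(3) by simp
  then obtain u where "y = (\<Sum>v\<in>range w. u v *\<^sub>R v)"
    using real_vector.span_finite[of "range w"] by auto
  also have "\<dots> = (\<Sum>i\<in>UNIV. u (w i) *\<^sub>R w i)"
    by (rule sum.reindex[OF nd(1), unfolded o_def])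
  finally show ?thesis by (rule exI[of _ "\<lambda>i. u (w i)"])
qed

definition lnv :: "real^'s \<Rightarrow> real^'s" where "lnv x = (\<chi> j. ln (x $ j))"
definition expv :: "real^'s \<Rightarrow> real^'s" where "expv y = (\<chi> j. exp (y $ j))"

lemma ln_act: "p \<in> S \<Longrightarrow> lnv (fst (act g p)) = lnv (fst p) + M (fst g)"
proof -
  assume "p \<in> S"
  then have pos: "0 < fst p $ j" for j by (simp add: tda_space_def)
  have "ln (fst p $ j * (\<Prod>i\<in>UNIV. (\<xi> i $ j) powi (fst g i)))
      = ln (fst p $ j) + (\<Sum>i\<in>UNIV. real_of_int (fst g i) * ln (\<xi> i $ j))" for j
  proof -
    have "ln ((\<xi> i $ j) powi (fst g i)) = real_of_int (fst g i) * ln (\<xi> i $ j)" for i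
      using powr_real_of_int'[of "\<xi> i $ j" "fst g i"] xi_pos[of i j] by (simp flip: ln_powr)
    moreover have "0 < (\<Prod>i\<in>UNIV. (\<xi> i $ j) powi (fst g i))"
      using xi_pos by (intro prod_pos zero_less_power_int) auto
    ultimately show ?thesis using pos[of j] xi_pos
      by (simp add: ln_mult ln_prod[where f = "\<lambda>i. (\<xi> i $ j) powi (fst g i)"] xi_nz)
  qed
  then show ?thesis
    by (simp add: lnv_def M_def w_def tda_act_def vec_eq_iff)
qed

lemma expv_lnv: "p \<in> S \<Longrightarrow> expv (lnv (fst p)) = fst p"
  by (simp add: expv_def lnv_def tda_space_def vec_eq_iff)

end



context tda begin

lemma B_finite: "finite B"
  using basis(1) independent_imp_finite by blast

definition phi :: "'e \<Rightarrow> 'e \<Rightarrow> real" where "phi b0 l = representation B l b0"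

lemma phi_linear: "linear (phi b0)"
proof (rule linearI)
  fix x y show "phi b0 (x + y) = phi b0 x + phi b0 y"
    unfolding phi_def using real_vector.representation_add[OF basis(1)] basis(2) by simp
next
  fix r x show "phi b0 (r *\<^sub>R x) = r *\<^sub>R phi b0 x"
    unfolding phi_def using real_vector.representation_scale[OF basis(1)] basis(2) by simp
qed

lemma phi_coeff: "b0 \<in> B \<Longrightarrow> phi b0 (\<Sum>b\<in>B. c b *\<^sub>R b) = c b0"
proof -
  assume b0: "b0 \<in> B"
  have "phi b0 (\<Sum>b\<in>B. c b *\<^sub>R b) = (\<Sum>b\<in>B. c b * phi b0 b)"
    by (simp add: linear_sum[OF phi_linear] linear_scale[OF phi_linear])
  also have "\<dots> = (\<Sum>b\<in>B. if b = b0 then c b else 0)"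
    by (rule sum.cong) (auto simp: phi_def real_vector.representation_basis[OF basis(1)])
  also have "\<dots> = c b0" using b0 B_finite by simp
  finally show ?thesis .
qed

lemma finite_lattice_ball: "finite {l \<in> int_span B. norm l \<le> R}"
proof -
  have "\<forall>b0. \<exists>K>0. \<forall>l. norm (phi b0 l) \<le> norm l * K"
    using phi_linear linear_conv_bounded_linear bounded_linear.pos_bounded by blast
  then obtain K where K: "\<And>b0. K b0 > 0" "\<And>b0 l. norm (phi b0 l) \<le> norm l * K b0" by metis
  define N where "N b = ceiling (R * K b)" for b
  have "{l \<in> int_span B. norm l \<le> R} \<subseteq>
      (\<lambda>c. \<Sum>b\<in>B. real_of_int (c b) *\<^sub>R b) ` (\<Pi>\<^sub>E b\<in>B. {-N b..N b})"
  proof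
    fix l assume "l \<in> {l \<in> int_span B. norm l \<le> R}"
    then obtain c where l: "l = (\<Sum>b\<in>B. real_of_int (c b) *\<^sub>R b)" "norm l \<le> R"
      unfolding int_span_def by blast
    have "\<bar>c b\<bar> \<le> N b" if "b \<in> B" for b
    proof -
      have "\<bar>real_of_int (c b)\<bar> = norm (phi b l)" using phi_coeff[OF that] l(1) by simp
      also have "\<dots> \<le> norm l * K b" by (rule K(2))
      also have "\<dots> \<le> R * K b" using l(2) K(1)[of b] by (simp add: mult_right_mono)
      finally show ?thesis unfolding N_def by linarith
    qed
    then have "restrict c B \<in> (\<Pi>\<^sub>E b\<in>B. {-N b..N b})" by (auto simp: abs_le_iff) (metis add.inverse_inverse neg_le_iff_le)
    moreover have "l = (\<Sum>b\<in>B. real_of_int (restrict c B b) *\<^sub>R b)" using l(1) by simp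
    ultimately show "l \<in> (\<lambda>c. \<Sum>b\<in>B. real_of_int (c b) *\<^sub>R b) ` (\<Pi>\<^sub>E b\<in>B. {-N b..N b})" by blast
  qed
  moreover have "finite (\<Pi>\<^sub>E b\<in>B. {-N b..N b})" using B_finite by (intro finite_PiE) auto
  ultimately show ?thesis using finite_subset by blast
qed

lemma lnv_cont: "continuous_on S (\<lambda>p. lnv (fst p))"
  unfolding lnv_def
  by (intro continuous_intros) (auto simp: tda_space_def less_le)

lemma proper_disc: "compact K \<Longrightarrow> K \<subseteq> S \<Longrightarrow> finite {g \<in> G. act g ` K \<inter> K \<noteq> {}}"
proof -
  assume K: "compact K" "K \<subseteq> S"
  have "compact ((\<lambda>p. lnv (fst p)) ` K)"
    using K by (intro compact_continuous_image continuous_on_subset[OF lnv_cont])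
  then obtain R0 where R0: "\<And>p. p \<in> K \<Longrightarrow> norm (lnv (fst p)) \<le> R0"
    using compact_imp_bounded bounded_iff by (metis imageI)
  have "compact (snd ` K)" using K by (intro compact_continuous_image continuous_intros)
  then obtain R1 where R1: "\<And>p. p \<in> K \<Longrightarrow> norm (snd p) \<le> R1"
    using compact_imp_bounded bounded_iff by (metis imageI)
  have "\<forall>n. \<exists>C>0. \<forall>v. norm (Apow A n v) \<le> norm v * C"
    using Apow_bl bounded_linear.pos_bounded by blast
  then obtain C where C: "\<And>n. C n > 0" "\<And>n v. norm (Apow A n v) \<le> norm v * C n" by metis
  define Nset where "Nset = {n. norm (M n) \<le> 2 * R0}"
  have "{g \<in> G. act g ` K \<inter> K \<noteq> {}} \<subseteq> Sigma Nset (\<lambda>n. {l \<in> int_span B. norm l \<le> R1 + R1 * C n})"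
  proof
    fix g assume "g \<in> {g \<in> G. act g ` K \<inter> K \<noteq> {}}"
    then obtain p where p: "p \<in> K" "act g p \<in> K" "g \<in> G" by blast
    have "M (fst g) = lnv (fst (act g p)) - lnv (fst p)" using ln_act[of p g] p K(2) by auto
    then have "norm (M (fst g)) \<le> 2 * R0"
      using R0[OF p(1)] R0[OF p(2)] norm_triangle_ineq4[of "lnv (fst (act g p))" "lnv (fst p)"] by simp
    then have 1: "fst g \<in> Nset" unfolding Nset_def by simp
    have "snd g = snd (act g p) - Apow A (fst g) (snd p)" by (simp add: tda_act_def)
    then have "norm (snd g) \<le> norm (snd (act g p)) + norm (Apow A (fst g) (snd p))"
      by (metis norm_triangle_ineq4)
    also have "\<dots> \<le> R1 + norm (snd p) * C (fst g)" using R1[OF p(2)] C(2) by (simp add: add_mono)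
    also have "\<dots> \<le> R1 + R1 * C (fst g)" using R1[OF p(1)] C(1)[of "fst g"] by (simp add: mult_right_mono)
    finally have 2: "norm (snd g) \<le> R1 + R1 * C (fst g)" .
    have "snd g \<in> int_span B" using p(3) by (auto simp: tda_group_def)
    then show "g \<in> Sigma Nset (\<lambda>n. {l \<in> int_span B. norm l \<le> R1 + R1 * C n})"
      using 1 2 by (cases g) auto
  qed
  moreover have "finite (Sigma Nset (\<lambda>n. {l \<in> int_span B. norm l \<le> R1 + R1 * C n}))"
    unfolding Nset_def using finite_M finite_lattice_ball by (intro finite_SigmaI)
  ultimately show ?thesis using finite_subset by blast
qed

end



context tda begin

lemma frac_bound: "\<bar>u - real_of_int \<lfloor>u\<rfloor>\<bar> \<le> 1"
  using floor_correct[of u] by linarith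

lemma frac_bound2: "u - real_of_int \<lfloor>u\<rfloor> \<le> 1" "0 \<le> u - real_of_int \<lfloor>u\<rfloor>"
  using floor_correct[of u] by linarith+

lemma expv_cont: "continuous_on X expv"
  unfolding expv_def by (intro continuous_intros)

definition Cf :: "((real^'s) \<times> 'e) set" where
  "Cf = expv ` cball 0 (\<Sum>i\<in>UNIV. norm (w i)) \<times> cball 0 (\<Sum>b\<in>B. norm b)"

lemma fundamental: "p \<in> S \<Longrightarrow> \<exists>g\<in>G. act g p \<in> Cf"
proof -
  assume pS: "p \<in> S"
  obtain u where u: "lnv (fst p) = (\<Sum>i\<in>UNIV. u i *\<^sub>R w i)" using w_decomp by blast
  define n where "n i = - \<lfloor>u i\<rfloor>" for i
  have "Apow A n (snd p) \<in> span B" using basis(2) by simp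
  then obtain u' where u': "Apow A n (snd p) = (\<Sum>b\<in>B. u' b *\<^sub>R b)"
    using real_vector.span_finite[OF B_finite] by auto
  define l where "l = (\<Sum>b\<in>B. real_of_int (- \<lfloor>u' b\<rfloor>) *\<^sub>R b)"
  have lL: "l \<in> int_span B" unfolding l_def int_span_def
    by (rule CollectI, rule exI[of _ "\<lambda>b. - \<lfloor>u' b\<rfloor>"]) simp
  define g where "g = (n, l)"
  have gG: "g \<in> G" using lL by (simp add: g_def tda_group_def)
  have aS: "act g p \<in> S" using act_S[OF pS] .
  have "lnv (fst (act g p)) = (\<Sum>i\<in>UNIV. (u i - real_of_int \<lfloor>u i\<rfloor>) *\<^sub>R w i)"
    using ln_act[OF pS, of g] u by (simp add: g_def M_def n_def scaleR_diff_left sum_subtractf sum_negf)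
  moreover have "norm (\<Sum>i\<in>UNIV. (u i - real_of_int \<lfloor>u i\<rfloor>) *\<^sub>R w i) \<le> (\<Sum>i\<in>UNIV. norm (w i))"
  proof (rule order_trans[OF norm_sum], rule sum_mono)
    fix i show "norm ((u i - real_of_int \<lfloor>u i\<rfloor>) *\<^sub>R w i) \<le> norm (w i)"
    proof -
      have "\<bar>u i - real_of_int \<lfloor>u i\<rfloor>\<bar> * norm (w i) \<le> norm (w i)"
        by (rule mult_left_le_one_le) (simp_all add: frac_bound2)
      then show ?thesis by simp
    qed
  qed
  ultimately have "norm (lnv (fst (act g p))) \<le> (\<Sum>i\<in>UNIV. norm (w i))" by simp
  then have "lnv (fst (act g p)) \<in> cball 0 (\<Sum>i\<in>UNIV. norm (w i))" by simp
  then have 1: "fst (act g p) \<in> expv ` cball 0 (\<Sum>i\<in>UNIV. norm (w i))"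
    using expv_lnv[OF aS] by (metis image_eqI)
  have "snd (act g p) = (\<Sum>b\<in>B. (u' b - real_of_int \<lfloor>u' b\<rfloor>) *\<^sub>R b)"
    by (simp add: tda_act_def g_def u' l_def scaleR_diff_left sum_subtractf sum_negf)
  moreover have "norm (\<Sum>b\<in>B. (u' b - real_of_int \<lfloor>u' b\<rfloor>) *\<^sub>R b) \<le> (\<Sum>b\<in>B. norm b)"
  proof (rule order_trans[OF norm_sum], rule sum_mono)
    fix b show "norm ((u' b - real_of_int \<lfloor>u' b\<rfloor>) *\<^sub>R b) \<le> norm b"
    proof -
      have "\<bar>u' b - real_of_int \<lfloor>u' b\<rfloor>\<bar> * norm b \<le> norm b"
        by (rule mult_left_le_one_le) (simp_all add: frac_bound2)
      then show ?thesis by simp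
    qed
  qed
  ultimately have "norm (snd (act g p)) \<le> (\<Sum>b\<in>B. norm b)" by simp
  then have 2: "snd (act g p) \<in> cball 0 (\<Sum>b\<in>B. norm b)" by simp
  show ?thesis using 1 2 gG unfolding Cf_def by (intro bexI[of _ g]) (simp_all add: mem_Times_iff)
qed

lemma compact_T: "compact_space T"
proof -
  define C where "C = Cf"
  have cC: "compact C" unfolding C_def Cf_def
    by (intro compact_Times compact_continuous_image expv_cont compact_cball)
  have CS: "C \<subseteq> S" unfolding C_def Cf_def by (auto simp: tda_space_def expv_def)
  have "q ` S \<subseteq> q ` C"
  proof
    fix x assume "x \<in> q ` S"
    then obtain p where p: "p \<in> S" "x = q p" by blast
    obtain g where "g \<in> G" "act g p \<in> C" using fundamental[OF p(1)] unfolding C_def by blast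
    moreover have "q p = q (act g p)" using orbit_eq \<open>g \<in> G\<close> by blast
    ultimately show "x \<in> q ` C" using p by blast
  qed
  then have "q ` C = topspace T" using CS topspace_T by blast
  moreover have "compactin T (q ` C)"
    using cC CS by (intro image_compactin[OF _ q_cont]) (simp add: compactin_subtopology)
  ultimately show ?thesis by (simp add: compact_space_def)
qed

end



context tda begin

lemma sep:
  assumes pS: "p \<in> S" and p'S: "p' \<in> S" and HG: "H \<subseteq> G" and Hne: "\<And>g. g \<in> H \<Longrightarrow> act g p \<noteq> p'"
  shows "\<exists>\<delta>>0. ball p \<delta> \<subseteq> S \<and> ball p' \<delta> \<subseteq> S \<and> (\<forall>g\<in>H. \<forall>a\<in>ball p \<delta>. act g a \<notin> ball p' \<delta>)"
proof -
  obtain r1 where r1: "r1 > 0" "cball p r1 \<subseteq> S" using open_S pS open_contains_cball by blast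
  obtain r2 where r2: "r2 > 0" "cball p' r2 \<subseteq> S" using open_S p'S open_contains_cball by blast
  define r where "r = min r1 r2"
  have r: "r > 0" "cball p r \<subseteq> S" "cball p' r \<subseteq> S"
    using r1 r2 unfolding r_def by auto
  define K where "K = cball p r \<union> cball p' r"
  have KS: "compact K" "K \<subseteq> S" unfolding K_def using r by auto
  define F where "F = {g \<in> G. act g ` K \<inter> K \<noteq> {}}"
  have fF: "finite F" unfolding F_def using proper_disc[OF KS] .
  have "\<forall>g\<in>F \<inter> H. \<exists>d>0. \<forall>a\<in>ball p d. act g a \<notin> ball p' d"
  proof
    fix g assume "g \<in> F \<inter> H"
    then have ne: "act g p \<noteq> p'" using Hne by blast
    define e where "e = dist (act g p) p'"
    have e: "e > 0" using ne unfolding e_def by simp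
    have "\<forall>\<epsilon>>0. \<exists>\<delta>>0. \<forall>x'. dist x' p < \<delta> \<longrightarrow> dist (act g x') (act g p) < \<epsilon>"
      using act_isCont[where g=g and x=p] unfolding continuous_at_eps_delta .
    then obtain d0 where d0: "d0 > 0" "\<And>a. dist a p < d0 \<Longrightarrow> dist (act g a) (act g p) < e / 2"
      using e by (meson half_gt_zero)
    show "\<exists>d>0. \<forall>a\<in>ball p d. act g a \<notin> ball p' d"
    proof (intro exI[of _ "min d0 (e/2)"] conjI ballI)
      show "min d0 (e/2) > 0" using d0 e by simp
      fix a assume a: "a \<in> ball p (min d0 (e/2))"
      show "act g a \<notin> ball p' (min d0 (e/2))"
      proof
        assume b: "act g a \<in> ball p' (min d0 (e/2))"
        have "dist (act g a) (act g p) < e/2" using a d0(2) by (simp add: dist_commute)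
        moreover have "dist (act g a) p' < e/2" using b by (simp add: dist_commute)
        ultimately have "e < e" unfolding e_def
          using dist_triangle[of "act g p" p' "act g a"] by (simp add: dist_commute)
        then show False by simp
      qed
    qed
  qed
  from bchoice[OF this] obtain dd where dd0: "\<forall>g\<in>F \<inter> H. dd g > 0 \<and> (\<forall>a\<in>ball p (dd g). act g a \<notin> ball p' (dd g))"
    by blast
  then have dd: "\<And>g. g \<in> F \<inter> H \<Longrightarrow> dd g > 0 \<and> (\<forall>a\<in>ball p (dd g). act g a \<notin> ball p' (dd g))"
    by blast
  define \<delta> where "\<delta> = Min (insert r (dd ` (F \<inter> H)))"
  have fin: "finite (insert r (dd ` (F \<inter> H)))" using fF by simp
  have \<delta>pos: "\<delta> > 0" unfolding \<delta>_def
  proof (subst Min_gr_iff[OF fin], simp, intro ballI)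
    fix x assume "x \<in> insert r (dd ` (F \<inter> H))"
    then show "0 < x" using r(1) dd by blast
  qed
  have \<delta>r: "\<delta> \<le> r" unfolding \<delta>_def using fin by simp
  have \<delta>d: "\<delta> \<le> dd g" if "g \<in> F \<inter> H" for g unfolding \<delta>_def using fin that by simp
  show ?thesis
  proof (intro exI[of _ \<delta>] conjI ballI)
    show "\<delta> > 0" by (rule \<delta>pos)
    have "ball p \<delta> \<subseteq> cball p r" unfolding subset_iff mem_ball mem_cball using \<delta>r by auto
    then show "ball p \<delta> \<subseteq> S" using r(2) by blast
    have "ball p' \<delta> \<subseteq> cball p' r" unfolding subset_iff mem_ball mem_cball using \<delta>r by auto
    then show "ball p' \<delta> \<subseteq> S" using r(3) by blast
    fix g a assume g: "g \<in> H" and a: "a \<in> ball p \<delta>"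
    show "act g a \<notin> ball p' \<delta>"
    proof
      assume b: "act g a \<in> ball p' \<delta>"
      show False
      proof (cases "g \<in> F")
        case True
        then have "a \<in> ball p (dd g)" "act g a \<in> ball p' (dd g)"
          using a b \<delta>d[of g] g by auto
        then show False using dd[of g] True g by blast
      next
        case False
        have "a \<in> K" "act g a \<in> K" using a b \<delta>r unfolding K_def by auto
        then have "g \<in> F" unfolding F_def using g HG by blast
        then show False using False by simp
      qed
    qed
  qed
qed

lemma Hausdorff_T: "Hausdorff_space T"
  unfolding Hausdorff_space_def topspace_T
proof clarify
  fix p p' assume pS: "p \<in> S" and p'S: "p' \<in> S" and ne: "q p \<noteq> q p'"
  have "\<And>g. g \<in> G \<Longrightarrow> act g p \<noteq> p'" using ne orbit_eq by blast
  then obtain \<delta> where \<delta>: "\<delta> > 0" "ball p \<delta> \<subseteq> S" "ball p' \<delta> \<subseteq> S"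
    "\<forall>g\<in>G. \<forall>a\<in>ball p \<delta>. act g a \<notin> ball p' \<delta>"
    using sep[OF pS p'S order_refl] by blast
  show "\<exists>U V. openin T U \<and> openin T V \<and> q p \<in> U \<and> q p' \<in> V \<and> disjnt U V"
  proof (intro exI conjI)
    show "openin T (q ` ball p \<delta>)" using \<delta> by (intro q_open) auto
    show "openin T (q ` ball p' \<delta>)" using \<delta> by (intro q_open) auto
    show "q p \<in> q ` ball p \<delta>" using \<delta> by auto
    show "q p' \<in> q ` ball p' \<delta>" using \<delta> by auto
    show "disjnt (q ` ball p \<delta>) (q ` ball p' \<delta>)"
      unfolding disjnt_def
    proof (rule ccontr)
      assume "q ` ball p \<delta> \<inter> q ` ball p' \<delta> \<noteq> {}"
      then obtain a b where ab: "a \<in> ball p \<delta>" "b \<in> ball p' \<delta>" "q a = q b" by auto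
      then obtain g where "g \<in> G" "b = act g a" using orbit_eq by blast
      then show False using \<delta>(4) ab by blast
    qed
  qed
qed

lemma free: "p \<in> S \<Longrightarrow> act g p = p \<Longrightarrow> g = gone"
proof -
  assume pS: "p \<in> S" and fx: "act g p = p"
  have "lnv (fst p) = lnv (fst p) + M (fst g)" using ln_act[OF pS, of g] fx by simp
  then have "M (fst g) = 0" by simp
  then have n0: "fst g = (\<lambda>_. 0)" by (rule M_inj)
  have "snd (act g p) = snd p + snd g" using n0 by (simp add: tda_act_def)
  then have "snd g = 0" using fx by simp
  then show ?thesis using n0 by (cases g) (simp add: gone_def)
qed

lemma second_countable_S: "second_countable (top_of_set S)"
proof -
  obtain \<B> :: "((real^'s) \<times> 'e) set set" where \<B>: "countable \<B>" "\<And>C. C \<in> \<B> \<Longrightarrow> open C"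
       "\<And>S. open S \<Longrightarrow> \<exists>U. U \<subseteq> \<B> \<and> S = \<Union>U"
    using univ_second_countable by blast
  have "second_countable (euclidean :: ((real^'s) \<times> 'e) topology)"
    unfolding second_countable_def
  proof (intro exI[of _ \<B>] conjI allI ballI impI)
    show "countable \<B>" by (rule \<B>(1))
    show "openin euclidean V" if "V \<in> \<B>" for V using \<B>(2)[OF that] by simp
    fix U :: "((real^'s) \<times> 'e) set" and x assume "openin euclidean U \<and> x \<in> U"
    then have "open U" "x \<in> U" by auto
    then obtain V where "V \<subseteq> \<B>" "U = \<Union>V" using \<B>(3) by blast
    then show "\<exists>V\<in>\<B>. x \<in> V \<and> V \<subseteq> U" using \<open>x \<in> U\<close> by blast
  qed
  then show ?thesis by (rule second_countable_subtopology)
qed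

lemma manifold_T: "is_manifold_modelled_on T TYPE((real^'s) \<times> 'e)"
  unfolding is_manifold_modelled_on_def
proof (intro conjI)
  show "Hausdorff_space T" by (rule Hausdorff_T)
  show "second_countable T"
    by (rule second_countable_open_map_image[OF q_cont q_open_map _ second_countable_S])
       (simp add: topspace_T)
  show "\<forall>x\<in>topspace T. \<exists>U. openin T U \<and> x \<in> U \<and>
      (\<exists>V::((real^'s) \<times> 'e) set. open V \<and> subtopology T U homeomorphic_space top_of_set V)"
    unfolding topspace_T
  proof
    fix x assume "x \<in> q ` S"
    then obtain p where pS: "p \<in> S" and x: "x = q p" by blast
    define H where "H = {g \<in> G. act g p \<noteq> p}"
    obtain \<delta> where \<delta>: "\<delta> > 0" "ball p \<delta> \<subseteq> S"
      "\<forall>g\<in>H. \<forall>a\<in>ball p \<delta>. act g a \<notin> ball p \<delta>"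
      using sep[OF pS pS, of H] unfolding H_def by blast
    define U where "U = ball p \<delta>"
    have US: "U \<subseteq> S" "open U" using \<delta> unfolding U_def by auto
    have inj: "inj_on q U"
    proof
      fix a b assume a: "a \<in> U" and b: "b \<in> U" and qab: "q a = q b"
      then obtain g where g: "g \<in> G" "b = act g a" using orbit_eq by blast
      show "a = b"
      proof (cases "g \<in> H")
        case True then show ?thesis using \<delta>(3) a b g unfolding U_def by blast
      next
        case False
        then have "act g p = p" using g unfolding H_def by blast
        then have "g = gone" using free pS by blast
        then show ?thesis using g by simp
      qed
    qed
    have tsU: "topspace (subtopology T (q ` U)) = q ` U"
      using US by (auto simp: topspace_T)
    have hm: "homeomorphic_map (top_of_set U) (subtopology T (q ` U)) q"
    proof (rule bijective_open_imp_homeomorphic_map)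
      have "subtopology (top_of_set S) U = top_of_set U"
        unfolding subtopology_subtopology using US(1) by (simp add: Int_absorb1)
      then have "continuous_map (top_of_set U) T q"
        using continuous_map_from_subtopology[OF q_cont, of U] by simp
      then show "continuous_map (top_of_set U) (subtopology T (q ` U)) q"
        by (simp add: continuous_map_in_subtopology)
      show "open_map (top_of_set U) (subtopology T (q ` U)) q"
        unfolding open_map_def
      proof clarify
        fix W assume "openin (top_of_set U) W"
        then have W: "open W" "W \<subseteq> U" using openin_open_eq[OF US(2)] by simp_all
        then have "openin T (q ` W)" using US by (intro q_open) auto
        moreover have "q ` W = q ` W \<inter> q ` U" using W by blast
        ultimately show "openin (subtopology T (q ` U)) (q ` W)"
          unfolding openin_subtopology by blast
      qed
      show "q ` topspace (top_of_set U) = topspace (subtopology T (q ` U))"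
        using tsU by simp
      show "inj_on q (topspace (top_of_set U))" using inj by simp
    qed
    show "\<exists>U. openin T U \<and> x \<in> U \<and>
      (\<exists>V::((real^'s) \<times> 'e) set. open V \<and> subtopology T U homeomorphic_space top_of_set V)"
    proof (intro exI conjI)
      show "openin T (q ` U)" using US by (intro q_open) auto
      show "x \<in> q ` U" using x \<delta> unfolding U_def by auto
      show "open U" by (rule US(2))
      show "subtopology T (q ` U) homeomorphic_space top_of_set U"
        using homeomorphic_map_imp_homeomorphic_space[OF hm] homeomorphic_space_sym by blast
    qed
  qed
qed

end

theorem proposition2p4:
  fixes B :: "'e::euclidean_space set"
    and \<xi> :: "'s::finite \<Rightarrow> real^'s"
    and A :: "'s \<Rightarrow> 'e \<Rightarrow> 'e"
  assumes basis: "independent B" "span B = UNIV"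
    and xi_pos: "\<And>i j. 0 < \<xi> i $ j"
    and A_lin: "\<And>i. linear (A i)"
    and A_bij: "\<And>i. bij (A i)"
    and A_lattice: "\<And>i. A i ` int_span B = int_span B"
    and A_comm: "\<And>i i'. A i \<circ> A i' = A i' \<circ> A i"
    and nondeg: "tda_nondegenerate \<xi>"
  shows "properly_discontinuous (tda_group B) (tda_act \<xi> A) tda_space
    \<and> compact_space
        (quotient_topology (top_of_set tda_space) (orbit (tda_group B) (tda_act \<xi> A)))
    \<and> is_manifold_modelled_on
        (quotient_topology (top_of_set tda_space) (orbit (tda_group B) (tda_act \<xi> A)))
        TYPE((real^'s) \<times> 'e)"
proof -
  interpret tda B \<xi> A
    by (rule tda.intro[OF assms])
  show ?thesis
    using proper_disc compact_T manifold_T unfolding properly_discontinuous_def by blast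
qed

end
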